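(* Let $(M,\mathrm{d})$ be a metric space, $\mathcal X$ a set, $\mathcal S\subseteq M^{\mathcal X}$, $\tau>0$, and let $\mathcal Z:\mathcal S\to\mathcal P(\mathcal T)$ be a learning problem. Let $\mu$ be a probability measure over $\mathcal S$. Suppose there is a deterministic algorithm $\mathcal A$ that learns $\mathcal Z$ with probability $\beta$ over the instance $s\sim\mu$ from $q$ many $\tau$-accurate evaluation queries. Then for any $f\in M^{\mathcal X}$ it holds $$q\geq\frac{\beta-\sup_{t\in\mathcal T}\Pr_{s\sim\mu}[s\in\mathcal Z_t]}{\max_{x\in\mathcal X}\Pr_{s\sim\mu}\left[\mathrm{d}(s(x),f(x))>\tau\right]}.$$
   Context: A learning problem is a map $\mathcal Z:\mathcal S\to\mathcal P(\mathcal T)$ into the power set of a target set $\mathcal T$; given oracle access to an unknown source $s\in\mathcal S$, the task is to output some $t\in\mathcal Z(s)$. For $t\in\mathcal T$, $\mathcal Z_t=\{s\in\mathcal S: t\in\mathcal Z(s)\}$. For $s\in M^{\mathcal X}$ and $\tau>0$, the evaluation oracle $\mathrm{Eval}_\tau(s)$, when queried with $x\in\mathcal X$, returns some $v\in M$ with $\mathrm{d}(v,s(x))\le\tau$ (any such value may be returned); such a query is a $\tau$-accurate evaluation query. A deterministic algorithm learns $\mathcal Z$ with probability $\beta$ over $s\sim\mu$ from $q$ queries if $\Pr_{s\sim\mu}[\mathcal A$ with access to $\mathrm{Eval}_\tau(s)$ outputs an element of $\mathcal Z(s)$ using at most $q$ queries$]\ge\beta$, where success is required for every valid behaviour of the oracle.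 *)

theory Defs
  imports "HOL-Probability.Probability"
begin

text \<open>A deterministic adaptive query algorithm: given the history of
(query, answer) pairs so far, it either issues a new query or outputs a target.\<close>
datatype ('x, 'v, 't) step = Query 'x | Output 't

type_synonym ('x, 'v, 't) algorithm = "('x \<times> 'v) list \<Rightarrow> ('x, 'v, 't) step"

type_synonym ('x, 'v) responder = "('x \<times> 'v) list \<Rightarrow> 'x \<Rightarrow> 'v"

definition valid_eval_responder :: "real \<Rightarrow> ('x \<Rightarrow> 'm::metric_space) \<Rightarrow> ('x, 'm) responder \<Rightarrow> bool" where
  "valid_eval_responder \<tau> s R \<longleftrightarrow> (\<forall>h x. dist (R h x) (s x) \<le> \<tau>)"

fun run :: "('x, 'v, 't) algorithm \<Rightarrow> ('x, 'v) responder \<Rightarrow> nat \<Rightarrow> ('x \<times> 'v) list \<Rightarrow> 't option" where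
  "run A R 0 h = (case A h of Output t \<Rightarrow> Some t | Query x \<Rightarrow> None)"
| "run A R (Suc n) h = (case A h of Output t \<Rightarrow> Some t | Query x \<Rightarrow> run A R n (h @ [(x, R h x)]))"

definition succeeds :: "('x, 'm::metric_space, 't) algorithm \<Rightarrow> (('x \<Rightarrow> 'm) \<Rightarrow> 't set)
    \<Rightarrow> real \<Rightarrow> nat \<Rightarrow> ('x \<Rightarrow> 'm) \<Rightarrow> bool" where
  "succeeds A Z \<tau> q s \<longleftrightarrow>
     (\<forall>R. valid_eval_responder \<tau> s R \<longrightarrow> (\<exists>t. run A R q [] = Some t \<and> t \<in> Z s))"

definition learns_with_prob :: "('x, 'm::metric_space, 't) algorithm \<Rightarrow> (('x \<Rightarrow> 'm) \<Rightarrow> 't set)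
    \<Rightarrow> real \<Rightarrow> nat \<Rightarrow> ('x \<Rightarrow> 'm) measure \<Rightarrow> real \<Rightarrow> bool" where
  "learns_with_prob A Z \<tau> q \<mu> \<beta> \<longleftrightarrow>
     measure \<mu> {s \<in> space \<mu>. succeeds A Z \<tau> q s} \<ge> \<beta>"

definition Zt :: "(('x \<Rightarrow> 'm) \<Rightarrow> 't set) \<Rightarrow> ('x \<Rightarrow> 'm) measure \<Rightarrow> 't \<Rightarrow> ('x \<Rightarrow> 'm) set" where
  "Zt Z \<mu> t = {s \<in> space \<mu>. t \<in> Z s}"

end

theory Submission
  imports Defs
begin

fun qs :: "('x, 'v, 't) algorithm \<Rightarrow> ('x, 'v) responder \<Rightarrow> nat \<Rightarrow> ('x \<times> 'v) list \<Rightarrow> 'x list" where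
  "qs A R 0 h = []"
| "qs A R (Suc n) h = (case A h of Output t \<Rightarrow> [] | Query x \<Rightarrow> x # qs A R n (h @ [(x, R h x)]))"

lemma qs_length: "length (qs A R n h) \<le> n"
  by (induction n arbitrary: h) (auto split: step.splits)

lemma run_agree:
  fixes f s :: "'x \<Rightarrow> 'm::metric_space"
  assumes "\<forall>x\<in>set (qs A (\<lambda>h x. f x) n h). dist (s x) (f x) \<le> \<tau>"
  shows "run A (\<lambda>h x. if dist (f x) (s x) \<le> \<tau> then f x else s x) n h = run A (\<lambda>h x. f x) n h"
  using assms
proof (induction n arbitrary: h)
  case 0
  then show ?case by simp
next
  case (Suc n)
  show ?case
  proof (cases "A h")
    case (Query x)
    with Suc.prems have "dist (f x) (s x) \<le> \<tau>" by (simp add: dist_commute)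
    with Suc Query show ?thesis by simp
  qed simp
qed

theorem mainTheorem1:
  fixes \<mu> :: "('x \<Rightarrow> 'm::metric_space) measure"
    and Z :: "('x \<Rightarrow> 'm) \<Rightarrow> 't set"
    and A :: "('x, 'm, 't) algorithm"
    and \<tau> \<beta> :: real and q :: nat
    and f :: "'x \<Rightarrow> 'm"
  assumes "prob_space \<mu>"
    and "\<tau> > 0"
    and "\<And>t. Zt Z \<mu> t \<in> sets \<mu>"
    and "\<And>x. {s \<in> space \<mu>. dist (s x) (f x) > \<tau>} \<in> sets \<mu>"
    and "{s \<in> space \<mu>. succeeds A Z \<tau> q s} \<in> sets \<mu>"
    and "learns_with_prob A Z \<tau> q \<mu> \<beta>"
  shows "real q \<ge> (\<beta> - (SUP t. measure \<mu> (Zt Z \<mu> t)))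
                   / (SUP x. measure \<mu> {s \<in> space \<mu>. dist (s x) (f x) > \<tau>})"
proof -
  interpret P: prob_space \<mu> by fact
  define E where "E x = {s \<in> space \<mu>. dist (s x) (f x) > \<tau>}" for x
  define D where "D = (SUP x. measure \<mu> (E x))"
  define S where "S = (SUP t. measure \<mu> (Zt Z \<mu> t))"
  define Succ where "Succ = {s \<in> space \<mu>. succeeds A Z \<tau> q s}"
  have Esets: "E x \<in> sets \<mu>" for x using assms(4) by (simp add: E_def)
  have bddE: "bdd_above (range (\<lambda>x. measure \<mu> (E x)))"
    by (rule bdd_aboveI[where M=1]) (auto intro: P.prob_le_1)
  have bddZ: "bdd_above (range (\<lambda>t. measure \<mu> (Zt Z \<mu> t)))"
    by (rule bdd_aboveI[where M=1]) (auto intro: P.prob_le_1)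
  have Dge: "measure \<mu> (E x) \<le> D" for x unfolding D_def by (rule cSUP_upper[OF _ bddE]) simp
  have Sge: "measure \<mu> (Zt Z \<mu> t) \<le> S" for t unfolding S_def by (rule cSUP_upper[OF _ bddZ]) simp
  have D0: "0 \<le> D" using Dge[of undefined] by (meson measure_nonneg order_trans)
  define Rf :: "('x, 'm) responder" where "Rf = (\<lambda>h x. f x)"
  define L where "L = qs A Rf q []"
  define Bad where "Bad = (\<Union>x\<in>set L. E x)"
  have Badsets: "Bad \<in> sets \<mu>" unfolding Bad_def using Esets by auto
  have "measure \<mu> Bad \<le> (\<Sum>x\<in>set L. measure \<mu> (E x))"
    unfolding Bad_def by (rule P.finite_measure_subadditive_finite) (auto simp: Esets)
  also have "\<dots> \<le> (\<Sum>x\<in>set L. D)" by (rule sum_mono) (rule Dge)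
  also have "\<dots> = real (card (set L)) * D" by simp
  also have "\<dots> \<le> real q * D"
  proof (rule mult_right_mono[OF _ D0])
    have "card (set L) \<le> length L" by (rule card_length)
    also have "\<dots> \<le> q" unfolding L_def by (rule qs_length)
    finally show "real (card (set L)) \<le> real q" by simp
  qed
  finally have Badle: "measure \<mu> Bad \<le> real q * D" .
  define Good where "Good = (case run A Rf q [] of Some t \<Rightarrow> Zt Z \<mu> t | None \<Rightarrow> {})"
  have Goodsets: "Good \<in> sets \<mu>" unfolding Good_def using assms(3) by (auto split: option.splits)
  have Goodle: "measure \<mu> Good \<le> S" unfolding Good_def using Sge
    by (auto split: option.splits simp: S_def intro: cSUP_upper2[OF bddZ] )
  have sub: "Succ \<subseteq> Good \<union> Bad"
  proof
    fix s assume sS: "s \<in> Succ"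
    show "s \<in> Good \<union> Bad"
    proof (cases "s \<in> Bad")
      case False
      with sS have ok: "\<forall>x\<in>set L. dist (s x) (f x) \<le> \<tau>"
        by (auto simp: Bad_def E_def Succ_def not_less)
      define Rs :: "('x, 'm) responder" where "Rs = (\<lambda>h x. if dist (f x) (s x) \<le> \<tau> then f x else s x)"
      have valid: "valid_eval_responder \<tau> s Rs"
        unfolding valid_eval_responder_def Rs_def using assms(2) by auto
      have eq: "run A Rs q [] = run A Rf q []"
        unfolding Rs_def Rf_def by (rule run_agree) (use ok in \<open>simp add: L_def Rf_def\<close>)
      from sS valid obtain t where "run A Rs q [] = Some t" "t \<in> Z s"
        by (auto simp: Succ_def succeeds_def)
      with eq have "run A Rf q [] = Some t" by simp
      with \<open>t \<in> Z s\<close> sS show ?thesis by (simp add: Good_def Zt_def Succ_def)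
    qed simp
  qed
  have "\<beta> \<le> measure \<mu> Succ" using assms(6) by (simp add: learns_with_prob_def Succ_def)
  also have "\<dots> \<le> measure \<mu> (Good \<union> Bad)"
    by (rule P.finite_measure_mono[OF sub]) (use Goodsets Badsets in auto)
  also have "\<dots> \<le> measure \<mu> Good + measure \<mu> Bad"
    by (rule measure_Un_le[OF Goodsets Badsets])
  also have "\<dots> \<le> S + real q * D" using Goodle Badle by simp
  finally have main: "\<beta> - S \<le> real q * D" by simp
  have "(\<beta> - S) / D \<le> real q"
  proof (cases "D = 0")
    case True then show ?thesis by simp
  next
    case False
    with D0 have "D > 0" by simp
    with main show ?thesis by (simp add: divide_le_eq)
  qed
  then show ?thesis by (simp add: S_def D_def E_def)
qed

end
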